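(* Let $\mu$ be the Möbius function of the incidence algebra of the decomposition space $\mathbf C$ of layered finite posets, i.e. the convolution inverse of the zeta function $\zeta\equiv 1$ in the algebra of functions on isomorphism classes of finite posets with the convolution product described below. Then for every finite poset $P$, \[ \mu(P)=\begin{cases}(-1)^n & \text{if $P$ is a discrete poset (no two distinct elements comparable) with $n$ elements},\\ 0 & \text{otherwise.}\end{cases} \]
   Context: For $n\ge 0$ let $\underline n=\{1,\dots,n\}$ (with $\underline 0=\emptyset$). An $n$-layered finite poset is a finite poset $P$ with a monotone map $l:P\to\underline n$; its layers $P_i=l^{-1}(i)$ may be empty. The groupoid $\mathbf C_n$ has these as objects and poset isomorphisms commuting with the layerings as morphisms; these assemble into a simplicial groupoid $\mathbf C$ (inner face maps join adjacent layers, outer face maps delete the first/last layer, degeneracies insert empty layers), which is a decomposition space; $\mathbf C_1$ is the groupoid of finite posets. Taking homotopy cardinality of its incidence coalgebra, the incidence algebra of $\mathbf C$ is the $\mathbb Q$-vector space of functions $\varphi$ from isomorphism classes of finite posets to $\mathbb Q$ with convolution \[(\varphi*\psi)(P)=\sum_{l:P\to \underline 2\ \text{monotone}}\varphi(l^{-1}(1))\,\psi(l^{-1}(2)),\] where $l^{-1}(1),l^{-1}(2)$ carry the induced orders; the unit is $\delta(P)=1$ if $P=\emptyset$ and $0$ otherwise. The zeta function is $\zeta(P)=1$ for all $P$, and the Möbius function $\mu$ is its convolution inverse. *)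

theory Defs
  imports Complex_Main "HOL-Library.FuncSet"
begin

definition fin_poset :: "'a set \<Rightarrow> ('a \<Rightarrow> 'a \<Rightarrow> bool) \<Rightarrow> bool" where
  "fin_poset A le \<longleftrightarrow> finite A
     \<and> (\<forall>x y. le x y \<longrightarrow> x \<in> A \<and> y \<in> A)
     \<and> (\<forall>x\<in>A. le x x)
     \<and> (\<forall>x\<in>A. \<forall>y\<in>A. le x y \<and> le y x \<longrightarrow> x = y)
     \<and> (\<forall>x\<in>A. \<forall>y\<in>A. \<forall>z\<in>A. le x y \<and> le y z \<longrightarrow> le x z)"

definition induced :: "('a \<Rightarrow> 'a \<Rightarrow> bool) \<Rightarrow> 'a set \<Rightarrow> 'a \<Rightarrow> 'a \<Rightarrow> bool" where
  "induced le B = (\<lambda>x y. x \<in> B \<and> y \<in> B \<and> le x y)"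

definition mono_layerings :: "'a set \<Rightarrow> ('a \<Rightarrow> 'a \<Rightarrow> bool) \<Rightarrow> ('a \<Rightarrow> nat) set" where
  "mono_layerings A le =
     {l \<in> A \<rightarrow>\<^sub>E {1, 2}. \<forall>x\<in>A. \<forall>y\<in>A. le x y \<longrightarrow> l x \<le> l y}"

definition conv ::
  "('a set \<Rightarrow> ('a \<Rightarrow> 'a \<Rightarrow> bool) \<Rightarrow> rat) \<Rightarrow> ('a set \<Rightarrow> ('a \<Rightarrow> 'a \<Rightarrow> bool) \<Rightarrow> rat)
    \<Rightarrow> 'a set \<Rightarrow> ('a \<Rightarrow> 'a \<Rightarrow> bool) \<Rightarrow> rat" where
  "conv \<phi> \<psi> A le =
     (\<Sum>l\<in>mono_layerings A le.
        \<phi> {x\<in>A. l x = 1} (induced le {x\<in>A. l x = 1})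
      * \<psi> {x\<in>A. l x = 2} (induced le {x\<in>A. l x = 2}))"

definition zeta :: "'a set \<Rightarrow> ('a \<Rightarrow> 'a \<Rightarrow> bool) \<Rightarrow> rat" where
  "zeta A le = 1"

definition delta :: "'a set \<Rightarrow> ('a \<Rightarrow> 'a \<Rightarrow> bool) \<Rightarrow> rat" where
  "delta A le = (if A = {} then 1 else 0)"

definition is_moebius :: "('a set \<Rightarrow> ('a \<Rightarrow> 'a \<Rightarrow> bool) \<Rightarrow> rat) \<Rightarrow> bool" where
  "is_moebius \<mu> \<longleftrightarrow> (\<forall>A le. fin_poset A le \<longrightarrow>
       conv \<mu> zeta A le = delta A le \<and> conv zeta \<mu> A le = delta A le)"

definition discrete_poset :: "'a set \<Rightarrow> ('a \<Rightarrow> 'a \<Rightarrow> bool) \<Rightarrow> bool" where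
  "discrete_poset A le \<longleftrightarrow> (\<forall>x\<in>A. \<forall>y\<in>A. le x y \<longrightarrow> x = y)"

end

theory Submission
  imports Defs
begin

definition fval :: "'a set \<Rightarrow> ('a \<Rightarrow> 'a \<Rightarrow> bool) \<Rightarrow> rat" where
  "fval A le = (if discrete_poset A le then (-1) ^ card A else 0)"

lemma alt_sum:
  assumes "finite M"
  shows "(\<Sum>S\<in>Pow M. (-1::rat) ^ card S) = (if M = {} then 1 else 0)"
  using assms
proof (induction M rule: finite_induct)
  case empty
  then show ?case by simp
next
  case (insert x F)
  have disj: "Pow F \<inter> insert x ` Pow F = {}" using insert.hyps by auto
  have inj: "inj_on (insert x) (Pow F)" using insert.hyps
    by (intro inj_onI) (metis PowD insert_ident subset_iff)
  have "(\<Sum>S\<in>Pow (insert x F). (-1::rat) ^ card S)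
      = (\<Sum>S\<in>Pow F. (-1::rat) ^ card S) + (\<Sum>S\<in>insert x ` Pow F. (-1::rat) ^ card S)"
    unfolding Pow_insert using insert.hyps disj by (intro sum.union_disjoint) auto
  also have "(\<Sum>S\<in>insert x ` Pow F. (-1::rat) ^ card S) = (\<Sum>S\<in>Pow F. (-1::rat) ^ card (insert x S))"
    using inj by (simp add: sum.reindex)
  also have "\<dots> = (\<Sum>S\<in>Pow F. - ((-1::rat) ^ card S))"
  proof (rule sum.cong[OF refl])
    fix S assume "S \<in> Pow F"
    then have "finite S" "x \<notin> S" using insert.hyps finite_subset by auto
    then show "(-1::rat) ^ card (insert x S) = - ((-1::rat) ^ card S)" by simp
  qed
  finally have "(\<Sum>S\<in>Pow (insert x F). (-1::rat) ^ card S) = 0" by (simp only: sum_negf add.right_inverse)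
  then show ?case by simp
qed

lemma induced_self:
  assumes "fin_poset A le" shows "induced le A = le"
  using assms unfolding fin_poset_def induced_def by (intro ext) blast

lemma fin_poset_induced:
  assumes "fin_poset A le" "B \<subseteq> A" shows "fin_poset B (induced le B)"
proof -
  have "finite B" using assms unfolding fin_poset_def by (auto intro: finite_subset)
  moreover have "\<forall>x\<in>B. \<forall>y\<in>B. \<forall>z\<in>B. induced le B x y \<and> induced le B y z \<longrightarrow> induced le B x z"
    using assms unfolding fin_poset_def induced_def by blast
  moreover have "\<forall>x\<in>B. \<forall>y\<in>B. induced le B x y \<and> induced le B y x \<longrightarrow> x = y"
    using assms unfolding fin_poset_def induced_def by blast
  moreover have "\<forall>x\<in>B. induced le B x x"
    using assms unfolding fin_poset_def induced_def by blast
  moreover have "\<forall>x y. induced le B x y \<longrightarrow> x \<in> B \<and> y \<in> B" by (simp add: induced_def)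
  ultimately show ?thesis unfolding fin_poset_def by blast
qed

lemma finite_ML: "finite A \<Longrightarrow> finite (mono_layerings A le)"
  unfolding mono_layerings_def
  by (rule finite_subset[of _ "A \<rightarrow>\<^sub>E {1,2}"]) (auto intro: finite_PiE)

lemma minimal_exists:
  assumes "fin_poset A le" "A \<noteq> {}"
  shows "\<exists>m\<in>A. \<forall>y\<in>A. le y m \<longrightarrow> y = m"
proof -
  obtain a where a: "a \<in> A" using assms by auto
  obtain m where m: "m \<in> A" and least: "\<forall>y. y \<in> A \<longrightarrow> card {z\<in>A. le z m} \<le> card {z\<in>A. le z y}"
    using ex_has_least_nat[of "\<lambda>x. x \<in> A" a "\<lambda>x. card {z\<in>A. le z x}"] a by blast
  have fin: "finite A" using assms unfolding fin_poset_def by auto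
  show ?thesis
  proof (intro bexI[OF _ m] ballI impI)
    fix y assume y: "y \<in> A" "le y m"
    show "y = m"
    proof (rule ccontr)
      assume ne: "y \<noteq> m"
      have sub: "{z\<in>A. le z y} \<subset> {z\<in>A. le z m}"
      proof
        show "{z\<in>A. le z y} \<subseteq> {z\<in>A. le z m}"
          using assms(1) y m unfolding fin_poset_def by blast
        have "m \<notin> {z\<in>A. le z y}" using assms(1) y m ne unfolding fin_poset_def by blast
        moreover have "m \<in> {z\<in>A. le z m}" using assms(1) m unfolding fin_poset_def by blast
        ultimately show "{z\<in>A. le z y} \<noteq> {z\<in>A. le z m}" by blast
      qed
      have "card {z\<in>A. le z y} < card {z\<in>A. le z m}"
        using fin by (intro psubset_card_mono[OF _ sub]) auto
      with least y show False by force
    qed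
  qed
qed

lemma key:
  assumes P: "fin_poset A le"
  shows "(\<Sum>l\<in>mono_layerings A le. fval {x\<in>A. l x = 1} (induced le {x\<in>A. l x = 1})) = delta A le"
proof -
  define LS where "LS = mono_layerings A le"
  define M where "M = {m\<in>A. \<forall>y\<in>A. le y m \<longrightarrow> y = m}"
  have fin: "finite A" using P unfolding fin_poset_def by auto
  have finLS: "finite LS" unfolding LS_def using finite_ML[OF fin] .
  have disc_iff: "discrete_poset {x\<in>A. l x = 1} (induced le {x\<in>A. l x = 1}) \<longleftrightarrow> {x\<in>A. l x = 1} \<subseteq> M"
    if l: "l \<in> LS" for l
  proof
    assume d: "discrete_poset {x\<in>A. l x = 1} (induced le {x\<in>A. l x = 1})"
    show "{x\<in>A. l x = 1} \<subseteq> M"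
    proof
      fix x assume x: "x \<in> {x\<in>A. l x = 1}"
      have "y = x" if y: "y \<in> A" "le y x" for y
      proof -
        have "l y \<le> l x" using l y x unfolding LS_def mono_layerings_def by blast
        moreover have "l y \<in> {1,2}" using l y unfolding LS_def mono_layerings_def by auto
        ultimately have "l y = 1" using x by auto
        then show ?thesis using d x y unfolding discrete_poset_def induced_def by auto
      qed
      then show "x \<in> M" using x unfolding M_def by auto
    qed
  next
    assume "{x\<in>A. l x = 1} \<subseteq> M"
    then show "discrete_poset {x\<in>A. l x = 1} (induced le {x\<in>A. l x = 1})"
      unfolding discrete_poset_def induced_def M_def by auto
  qed
  define L' where "L' = {l\<in>LS. {x\<in>A. l x = 1} \<subseteq> M}"
  have "(\<Sum>l\<in>LS. fval {x\<in>A. l x = 1} (induced le {x\<in>A. l x = 1}))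
      = (\<Sum>l\<in>LS. if {x\<in>A. l x = 1} \<subseteq> M then (-1::rat) ^ card {x\<in>A. l x = 1} else 0)"
  proof (rule sum.cong[OF refl])
    fix l assume "l \<in> LS"
    then show "fval {x\<in>A. l x = 1} (induced le {x\<in>A. l x = 1})
      = (if {x\<in>A. l x = 1} \<subseteq> M then (-1::rat) ^ card {x\<in>A. l x = 1} else 0)"
      using disc_iff[of l] unfolding fval_def by presburger
  qed
  also have "\<dots> = (\<Sum>l\<in>L'. (-1::rat) ^ card {x\<in>A. l x = 1})"
    unfolding L'_def by (rule sum.inter_filter[OF finLS, symmetric])
  also have "\<dots> = (\<Sum>S\<in>Pow M. (-1::rat) ^ card S)"
  proof (rule sum.reindex_bij_witness[where i = "\<lambda>S. (\<lambda>x\<in>A. if x \<in> S then 1 else 2)"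
        and j = "\<lambda>l. {x\<in>A. l x = 1}"])
    fix l assume l: "l \<in> L'"
    then have lE: "l \<in> A \<rightarrow>\<^sub>E {1,2}" unfolding L'_def LS_def mono_layerings_def by auto
    show "(\<lambda>x\<in>A. if x \<in> {x\<in>A. l x = 1} then 1 else 2) = l"
    proof
      fix x show "(\<lambda>x\<in>A. if x \<in> {x\<in>A. l x = 1} then 1 else 2) x = l x"
        using lE by (cases "x \<in> A") (auto simp: PiE_def extensional_def)
    qed
    show "{x\<in>A. l x = 1} \<in> Pow M" using l unfolding L'_def by auto
  next
    fix S assume S: "S \<in> Pow M"
    then have SA: "S \<subseteq> A" unfolding M_def by auto
    show "{x\<in>A. (\<lambda>x\<in>A. if x \<in> S then 1 else 2) x = (1::nat)} = S" using SA by auto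
    have "(\<lambda>x\<in>A. if x \<in> S then 1 else 2::nat) \<in> LS"
      unfolding LS_def mono_layerings_def
    proof (intro CollectI conjI ballI impI)
      show "(\<lambda>x\<in>A. if x \<in> S then 1 else 2::nat) \<in> A \<rightarrow>\<^sub>E {1, 2}" by auto
      fix x y assume "x \<in> A" "y \<in> A" "le x y"
      then show "(\<lambda>x\<in>A. if x \<in> S then 1 else 2::nat) x \<le> (\<lambda>x\<in>A. if x \<in> S then 1 else 2::nat) y"
        using S unfolding M_def by auto
    qed
    then show "(\<lambda>x\<in>A. if x \<in> S then 1 else 2::nat) \<in> L'" unfolding L'_def using SA S by auto
  qed simp
  also have "\<dots> = (if M = {} then 1 else 0)"
    using fin by (intro alt_sum) (auto simp: M_def)
  also have "\<dots> = delta A le"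
  proof -
    have "M = {} \<longleftrightarrow> A = {}" using minimal_exists[OF P] unfolding M_def by auto
    then show ?thesis unfolding delta_def by simp
  qed
  finally show ?thesis unfolding LS_def .
qed

theorem theorem3p4:
  fixes \<mu> :: "'a set \<Rightarrow> ('a \<Rightarrow> 'a \<Rightarrow> bool) \<Rightarrow> rat"
    and A :: "'a set" and le :: "'a \<Rightarrow> 'a \<Rightarrow> bool"
  assumes "is_moebius \<mu>"
    and "fin_poset A le"
  shows "\<mu> A le = (if discrete_poset A le then (-1) ^ card A else 0)"
proof -
  have "\<mu> A le = fval A le" if "card A = n" "fin_poset A le" for n A le
    using that
  proof (induction n arbitrary: A le rule: less_induct)
    case (less n A le)
    note P = less.prems(2)
    have fin: "finite A" using P unfolding fin_poset_def by auto
    define LS where "LS = mono_layerings A le"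
    define c where "c = (\<lambda>x\<in>A. 1::nat)"
    have cLS: "c \<in> LS" unfolding c_def LS_def mono_layerings_def by auto
    have Dc: "{x\<in>A. c x = 1} = A" unfolding c_def by auto
    have finLS: "finite LS" unfolding LS_def using finite_ML[OF fin] .
    have IH: "\<mu> {x\<in>A. l x = 1} (induced le {x\<in>A. l x = 1}) = fval {x\<in>A. l x = 1} (induced le {x\<in>A. l x = 1})"
      if l: "l \<in> LS - {c}" for l
    proof -
      have lE: "l \<in> A \<rightarrow>\<^sub>E {1,2}" using l unfolding LS_def mono_layerings_def by auto
      have "\<exists>x\<in>A. l x \<noteq> 1"
      proof (rule ccontr)
        assume "\<not> (\<exists>x\<in>A. l x \<noteq> 1)"
        then have "l = c" using lE unfolding c_def by (auto simp: PiE_def extensional_def)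
        with l show False by auto
      qed
      then have "{x\<in>A. l x = 1} \<subset> A" by auto
      then have "card {x\<in>A. l x = 1} < n" using fin less.prems(1) psubset_card_mono by blast
      then show ?thesis using less.IH fin_poset_induced[OF P] by auto
    qed
    have "delta A le = conv \<mu> zeta A le" using assms(1) P unfolding is_moebius_def by auto
    also have "\<dots> = (\<Sum>l\<in>LS. \<mu> {x\<in>A. l x = 1} (induced le {x\<in>A. l x = 1}))"
      unfolding conv_def zeta_def LS_def by simp
    also have "\<dots> = \<mu> A le + (\<Sum>l\<in>LS - {c}. \<mu> {x\<in>A. l x = 1} (induced le {x\<in>A. l x = 1}))"
      by (subst sum.remove[OF finLS cLS]) (simp only: Dc induced_self[OF P])
    also have "(\<Sum>l\<in>LS - {c}. \<mu> {x\<in>A. l x = 1} (induced le {x\<in>A. l x = 1}))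
        = (\<Sum>l\<in>LS - {c}. fval {x\<in>A. l x = 1} (induced le {x\<in>A. l x = 1}))"
      using IH by (rule sum.cong[OF refl])
    finally have e1: "delta A le = \<mu> A le + (\<Sum>l\<in>LS - {c}. fval {x\<in>A. l x = 1} (induced le {x\<in>A. l x = 1}))" .
    have "delta A le = (\<Sum>l\<in>LS. fval {x\<in>A. l x = 1} (induced le {x\<in>A. l x = 1}))"
      using key[OF P] unfolding LS_def by simp
    also have "\<dots> = fval A le + (\<Sum>l\<in>LS - {c}. fval {x\<in>A. l x = 1} (induced le {x\<in>A. l x = 1}))"
      by (subst sum.remove[OF finLS cLS]) (simp only: Dc induced_self[OF P])
    finally show ?case using e1 by simp
  qed
  then show ?thesis using assms(2) unfolding fval_def by blast
qed

end
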